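(* For $\alpha\ge1$ and $y>0$ let $G_\alpha(y)=\sum_{k\in\mathbb{Z}}e^{-\pi\alpha k^2/y}\cos\big(2\pi k(\tfrac12-\tfrac1{8y^2})\big)$. Then $$\max_{y\ge\frac{\sqrt3}2+\frac1{4\sqrt\alpha}}G_\alpha(y)=G_\alpha\Big(\tfrac{\sqrt3}2+\tfrac1{4\sqrt\alpha}\Big)\le G_\alpha\Big(\tfrac{\sqrt3}2\Big)-\tfrac{2\sqrt\alpha}{3}e^{-\frac{2\pi\alpha}{\sqrt3}}.$$ *)

theory Defs
  imports "HOL-Analysis.Analysis"
begin

definition G :: "real \<Rightarrow> real \<Rightarrow> real" where
  "G \<alpha> y = (\<Sum>\<^sub>\<infinity>k::int. exp (- pi * \<alpha> * (of_int k)\<^sup>2 / y) *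
                 cos (2 * pi * of_int k * (1/2 - 1 / (8 * y\<^sup>2))))"

end

theory Submission
  imports Defs
begin

lemma int_sym_has_sum:
  fixes f :: "int \<Rightarrow> real"
  assumes sym: "\<And>k. f (-k) = f k"
    and sm: "summable (\<lambda>n. \<bar>f (int (Suc n))\<bar>)"
  shows "(f has_sum (f 0 + 2 * (\<Sum>n. f (int (Suc n))))) UNIV"
proof -
  have s1: "summable (\<lambda>n. f (int (Suc n)))" by (rule summable_rabs_cancel[OF sm])
  have h1: "((\<lambda>n. f (int (Suc n))) has_sum (\<Sum>n. f (int (Suc n)))) UNIV"
    by (rule norm_summable_imp_has_sum[OF _ summable_sums[OF s1]]) (simp only: real_norm_def sm)
  have bP: "bij_betw (\<lambda>n. int (Suc n)) UNIV {k. k > 0}"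
    by (rule bij_betw_byWitness[where f'="\<lambda>k. nat k - 1"]) auto
  have bN: "bij_betw (\<lambda>n. - int (Suc n)) UNIV {k. k < 0}"
    by (rule bij_betw_byWitness[where f'="\<lambda>k. nat (-k) - 1"]) auto
  define S where "S = (\<Sum>n. f (int (Suc n)))"
  have hP: "(f has_sum S) {k. k > 0}"
    by (subst has_sum_reindex_bij_betw[OF bP, symmetric]) (rule h1[folded S_def])
  have hN: "(f has_sum S) {k. k < 0}"
    by (subst has_sum_reindex_bij_betw[OF bN, symmetric]) (unfold sym, rule h1[folded S_def])
  have "(f has_sum (S + S)) ({k. k > 0} \<union> {k. k < 0})"
    by (rule has_sum_Un_disjoint[OF hP hN]) auto
  then have "(f has_sum (f 0 + (S + S))) (insert 0 ({k. k > 0} \<union> {k. k < 0}))"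
    by (intro has_sum_insert) auto
  moreover have "insert 0 ({k::int. k > 0} \<union> {k. k < 0}) = UNIV" by auto
  moreover have "f 0 + (S + S) = f 0 + 2 * S" by simp
  ultimately show ?thesis unfolding S_def by metis
qed

definition ww :: "real \<Rightarrow> real \<Rightarrow> nat \<Rightarrow> real" where
  "ww c t n = (-1)^n * exp (- c * (real n)\<^sup>2) * cos (real n * t)"

definition SS :: "real \<Rightarrow> real \<Rightarrow> real" where
  "SS c t = (\<Sum>n. ww c t (Suc n))"

lemma exp_sq_le_geom:
  assumes "c \<ge> 0"
  shows "exp (- c * (real n)\<^sup>2) \<le> exp (-c) ^ n"
proof -
  have "real n \<le> (real n)\<^sup>2" by (cases n) (auto simp: power2_eq_square)
  then have "c * real n \<le> c * (real n)\<^sup>2" using mult_left_mono assms by blast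
  then have "- c * (real n)\<^sup>2 \<le> real n * (-c)" by (simp add: mult.commute)
  then show ?thesis by (simp add: exp_of_nat_mult[symmetric])
qed

lemma summable_exp_sq:
  assumes "c > 0"
  shows "summable (\<lambda>n. exp (- c * (real n)\<^sup>2))"
proof (rule summable_comparison_test[OF _ summable_geometric[of "exp (-c)"]])
  show "\<exists>N. \<forall>n\<ge>N. norm (exp (- c * (real n)\<^sup>2)) \<le> exp (-c) ^ n"
    using exp_sq_le_geom[of c] assms by auto
  show "norm (exp (-c)) < 1" using assms by simp
qed

lemma abs_ww_le: "\<bar>ww c t n\<bar> \<le> exp (- c * (real n)\<^sup>2)"
  by (simp add: ww_def abs_mult)

lemma summable_ww_abs:
  assumes "c > 0"
  shows "summable (\<lambda>n. \<bar>ww c t n\<bar>)"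
proof (rule summable_comparison_test[OF _ summable_exp_sq[OF assms]])
  show "\<exists>N. \<forall>n\<ge>N. norm \<bar>ww c t n\<bar> \<le> exp (- c * (real n)\<^sup>2)"
    using abs_ww_le[of c t] by auto
qed

lemma summable_ww:
  assumes "c > 0"
  shows "summable (ww c t)"
  using summable_ww_abs[OF assms] summable_rabs_cancel by blast

lemma cos_shift:
  "cos (2 * pi * real n * (1/2 - 1 / (8 * y\<^sup>2))) = (-1)^n * cos (real n * (pi / (4 * y\<^sup>2)))"
proof -
  have "2 * pi * real n * (1/2 - 1 / (8 * y\<^sup>2)) = real n * pi - real n * (pi / (4 * y\<^sup>2))"
    by (simp add: field_simps)
  then show ?thesis by (simp add: cos_diff sin_npi cos_npi)
qed

lemma G_SS:
  assumes "\<alpha> > 0" "y > 0"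
  shows "G \<alpha> y = 1 + 2 * SS (pi * \<alpha> / y) (pi / (4 * y\<^sup>2))"
proof -
  define f where "f = (\<lambda>k::int. exp (- pi * \<alpha> * (of_int k)\<^sup>2 / y) *
                 cos (2 * pi * of_int k * (1/2 - 1 / (8 * y\<^sup>2))))"
  have fn: "f (int n) = ww (pi * \<alpha> / y) (pi / (4 * y\<^sup>2)) n" for n
  proof -
    have e: "- pi * \<alpha> * (of_int (int n))\<^sup>2 / y = - (pi * \<alpha> / y) * (real n)\<^sup>2" by simp
    have "f (int n) = exp (- (pi * \<alpha> / y) * (real n)\<^sup>2) * cos (2 * pi * real n * (1/2 - 1 / (8 * y\<^sup>2)))"
      unfolding f_def e by simp
    also have "\<dots> = ww (pi * \<alpha> / y) (pi / (4 * y\<^sup>2)) n"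
      unfolding cos_shift ww_def by simp
    finally show ?thesis .
  qed
  have sym: "f (-k) = f k" for k
    unfolding f_def by simp
  have c: "pi * \<alpha> / y > 0" using assms by simp
  have sm0: "summable (\<lambda>n. \<bar>ww (pi * \<alpha> / y) (pi / (4 * y\<^sup>2)) (Suc n)\<bar>)"
    using summable_ww_abs[OF c] by (rule summable_ignore_initial_segment[where k=1, simplified])
  have sm: "summable (\<lambda>n. \<bar>f (int (Suc n))\<bar>)"
    unfolding fn by (rule sm0)
  have "(f has_sum (f 0 + 2 * (\<Sum>n. f (int (Suc n))))) UNIV"
    by (rule int_sym_has_sum[OF sym sm])
  then have "G \<alpha> y = f 0 + 2 * (\<Sum>n. f (int (Suc n)))"
    unfolding G_def f_def by (rule infsumI)
  also have "f 0 = 1" unfolding f_def by simp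
  also have "(\<Sum>n. f (int (Suc n))) = SS (pi * \<alpha> / y) (pi / (4 * y\<^sup>2))"
    unfolding SS_def fn by (rule refl)
  finally show ?thesis .
qed

lemma summable_ww_shift:
  assumes "c > 0"
  shows "summable (\<lambda>n. ww c t (n + k))"
  using summable_ignore_initial_segment[OF summable_ww[OF assms]] by simp

lemma summable_ww_shift_abs:
  assumes "c > 0"
  shows "summable (\<lambda>n. \<bar>ww c t (n + k)\<bar>)"
  using summable_ignore_initial_segment[OF summable_ww_abs[OF assms]] by simp

lemma SS_split:
  assumes "c > 0"
  shows "SS c t = ww c t 1 + (\<Sum>n. ww c t (n + 2))"
proof -
  have s: "summable (\<lambda>n. ww c t (Suc n))"
    using summable_ww_shift[OF assms, of t 1] by simp
  have "SS c t = (\<Sum>n. ww c t (Suc (Suc n))) + ww c t (Suc 0)"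
    unfolding SS_def by (rule suminf_split_head[OF s, THEN sym, unfolded diff_eq_eq])
  then show ?thesis by (simp add: add.commute)
qed

lemma ww_1: "ww c t 1 = - exp (-c) * cos t"
  by (simp add: ww_def)

lemma exp_shift2_le:
  assumes "c \<ge> 0"
  shows "exp (- c * (real (n + 2))\<^sup>2) \<le> exp (-c) ^ 4 * (exp (-c) ^ 5) ^ n"
proof -
  have "real n \<le> (real n)\<^sup>2" by (cases n) (auto simp: power2_eq_square)
  then have "4 + 5 * real n \<le> (real (n + 2))\<^sup>2" by (simp add: power2_eq_square algebra_simps)
  then have "c * (4 + 5 * real n) \<le> c * (real (n + 2))\<^sup>2" using mult_left_mono assms by blast
  then have "- c * (real (n + 2))\<^sup>2 \<le> (4 + 5 * real n) * (-c)" by (simp add: algebra_simps)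
  then have "exp (- c * (real (n + 2))\<^sup>2) \<le> exp ((4 + 5 * real n) * (-c))" by simp
  also have "\<dots> = exp (real (4 + 5 * n) * (-c))" by simp
  also have "\<dots> = exp (-c) ^ (4 + 5 * n)" by (rule exp_of_nat_mult)
  also have "\<dots> = exp (-c) ^ 4 * (exp (-c) ^ 5) ^ n" by (simp add: power_add power_mult)
  finally show ?thesis .
qed

definition RR :: "real \<Rightarrow> real" where "RR c = exp (-c) ^ 4 / (1 - exp (-c) ^ 5)"

lemma tail_bound:
  assumes "c > 0"
  shows "\<bar>\<Sum>n. ww c t (n + 2)\<bar> \<le> RR c"
proof -
  define x where "x = exp (-c)"
  have x0: "0 < x" "x < 1" using assms by (auto simp: x_def)
  have x5: "x ^ 5 < 1" using x0 by (simp add: power_less_one_iff)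
  have gs: "(\<lambda>n. x ^ 4 * (x ^ 5) ^ n) sums (x ^ 4 * (1 / (1 - x ^ 5)))"
    by (rule sums_mult[OF geometric_sums]) (use x0 x5 in auto)
  have "\<bar>\<Sum>n. ww c t (n + 2)\<bar> \<le> (\<Sum>n. \<bar>ww c t (n + 2)\<bar>)"
    by (rule summable_rabs[OF summable_ww_shift_abs[OF assms]])
  also have "\<dots> \<le> (\<Sum>n. x ^ 4 * (x ^ 5) ^ n)"
  proof (rule suminf_le)
    show "\<bar>ww c t (n + 2)\<bar> \<le> x ^ 4 * (x ^ 5) ^ n" for n
      using abs_ww_le[of c t "n+2"] exp_shift2_le[of c n] assms unfolding x_def by linarith
    show "summable (\<lambda>n. \<bar>ww c t (n + 2)\<bar>)" by (rule summable_ww_shift_abs[OF assms])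
    show "summable (\<lambda>n. x ^ 4 * (x ^ 5) ^ n)" using gs by (rule sums_summable)
  qed
  also have "\<dots> = RR c" using sums_unique[OF gs] unfolding RR_def x_def by simp
  finally show ?thesis .
qed

lemma SS_bounds:
  assumes "c > 0"
  shows "SS c t \<le> - exp (-c) * cos t + RR c" "SS c t \<ge> - exp (-c) * cos t - RR c"
  using SS_split[OF assms, of t] tail_bound[OF assms, of t] ww_1[of c t] by linarith+

lemma sinh_ge:
  assumes "v \<ge> (0::real)"
  shows "exp v - exp (-v) \<ge> 2 * v"
proof -
  define p where "p = 1 + v + v\<^sup>2 / 2"
  have p0: "p > 0" unfolding p_def using assms by (simp add: add_pos_nonneg)
  have pE: "p \<le> exp v" unfolding p_def by (rule exp_lower_Taylor_quadratic[OF assms])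
  have "exp (-v) = 1 / exp v" by (simp add: exp_minus field_simps)
  also have "\<dots> \<le> 1 / p" using p0 pE by (simp add: frac_le)
  finally have e1: "exp (-v) \<le> 1 / p" .
  have "p * p - 1 - 2 * v * p = (v\<^sup>2 / 2)\<^sup>2" unfolding p_def by (simp add: power2_eq_square algebra_simps)
  then have "p * p - 1 \<ge> 2 * v * p" by (smt (verit) zero_le_power2)
  then have "p - 1 / p \<ge> 2 * v" using p0 by (simp add: field_simps)
  then show ?thesis using e1 pE by linarith
qed

lemma cosh_ge:
  assumes "u \<ge> (0::real)"
  shows "exp u + exp (-u) \<ge> 2 + u\<^sup>2"
proof -
  have s: "exp (u/2) - exp (-(u/2)) \<ge> u" using sinh_ge[of "u/2"] assms by simp
  have "exp u + exp (-u) - 2 = (exp (u/2) - exp (-(u/2)))\<^sup>2"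
    by (simp add: power2_eq_square algebra_simps exp_add[symmetric] exp_minus_inverse)
  moreover have "(exp (u/2) - exp (-(u/2)))\<^sup>2 \<ge> u\<^sup>2" using s assms by (simp add: power_mono)
  ultimately show ?thesis by linarith
qed

lemma exp_le_small:
  assumes "0 \<le> c" "c \<le> (1/4::real)"
  shows "exp c \<le> 1 + 4 * c / 3"
proof -
  have "1 - c \<le> exp (-c)" using exp_ge_add_one_self[of "-c"] by simp
  then have "(1 - c) * exp c \<le> 1" using assms by (simp add: exp_minus field_simps)
  moreover have "c * (c * 4) \<le> c * 1" by (rule mult_left_mono) (use assms in auto)
  then have "(1 - c) * (1 + 4 * c / 3) \<ge> 1" by (simp add: algebra_simps)
  ultimately have "(1 - c) * exp c \<le> (1 - c) * (1 + 4 * c / 3)" by linarith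
  then show ?thesis by (rule mult_left_le_imp_le) (use assms in auto)
qed

lemma second_diff:
  assumes c: "0 < c" "c \<le> 1/4" and m: "(real m + 1)\<^sup>2 * c \<ge> 2/3"
  shows "exp (- c * (real (m+1))\<^sup>2) - exp (- c * (real (m+2))\<^sup>2)
         \<le> exp (- c * (real m)\<^sup>2) - exp (- c * (real (m+1))\<^sup>2)"
proof -
  define H where "H = exp (- c * (real (m+1))\<^sup>2)"
  define u where "u = 2 * c * (real m + 1)"
  have u0: "u \<ge> 0" unfolding u_def using c by simp
  have e1: "exp (- c * (real m)\<^sup>2) = H * exp (-c) * exp u"
    unfolding H_def u_def by (simp add: exp_add[symmetric] power2_eq_square algebra_simps)
  have e2: "exp (- c * (real (m+2))\<^sup>2) = H * exp (-c) * exp (-u)"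
    unfolding H_def u_def by (simp add: exp_add[symmetric] power2_eq_square algebra_simps)
  have "u\<^sup>2 = 4 * c * ((real m + 1)\<^sup>2 * c)" unfolding u_def by (simp add: power2_eq_square algebra_simps)
  also have "\<dots> \<ge> 4 * c * (2/3)" using m c by (intro mult_left_mono) auto
  finally have u2: "u\<^sup>2 \<ge> 8 * c / 3" by simp
  have "exp c \<le> 1 + 4 * c / 3" using exp_le_small c by simp
  then have "2 * exp c \<le> exp u + exp (-u)" using cosh_ge[OF u0] u2 by linarith
  then have "2 * exp c * exp (-c) \<le> (exp u + exp (-u)) * exp (-c)" by (simp add: mult_right_mono)
  moreover have "exp c * exp (-c) = 1" by (simp add: exp_add[symmetric])
  ultimately have "2 \<le> exp (-c) * exp u + exp (-c) * exp (-u)" by (simp add: algebra_simps)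
  then have "H * 2 \<le> H * (exp (-c) * exp u + exp (-c) * exp (-u))"
    by (rule mult_left_mono) (simp add: H_def)
  then have "2 * H \<le> H * exp (-c) * exp u + H * exp (-c) * exp (-u)"
    by (simp add: algebra_simps)
  then show ?thesis unfolding e1 e2 H_def[symmetric] by linarith
qed

definition hh :: "real \<Rightarrow> nat \<Rightarrow> real" where "hh c n = exp (- c * (real n)\<^sup>2)"

lemma hh_mono: "c \<ge> 0 \<Longrightarrow> hh c (Suc n) \<le> hh c n"
  unfolding hh_def by (simp add: mult_left_mono power_mono)

lemma hh_lim: assumes "c > 0" shows "(\<lambda>n. hh c (n + k)) \<longlonglongrightarrow> 0"
proof -
  have lt: "norm (exp (-c)) < 1" using assms by simp
  have t: "(\<lambda>n. exp (-c) ^ (n + k)) \<longlonglongrightarrow> 0"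
    by (rule LIMSEQ_ignore_initial_segment[OF LIMSEQ_power_zero[OF lt]])
  have b: "norm (hh c (n + k)) \<le> exp (-c) ^ (n + k)" for n
  proof -
    have "hh c (n + k) \<le> exp (-c) ^ (n + k)" unfolding hh_def by (rule exp_sq_le_geom) (use assms in simp)
    moreover have "hh c (n + k) > 0" unfolding hh_def by simp
    ultimately show ?thesis by simp
  qed
  show ?thesis by (rule Lim_null_comparison[OF always_eventually t]) (use b in blast)
qed

lemma alt_bound:
  fixes c :: real and J :: nat
  assumes c: "c > 0"
    and sd: "\<And>m. m \<ge> 2 * J + 1 \<Longrightarrow> hh c (m+1) - hh c (m+2) \<le> hh c m - hh c (m+1)"
  shows "1 + 2 * (\<Sum>n. (-1)^(Suc n) * hh c (Suc n)) \<le> 1 - hh c (2 * J + 1)"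
proof -
  define h where "h = hh c"
  define d where "d n = h n - h (Suc n)" for n
  define n0 where "n0 = 2 * J + 1"
  have d0: "d n \<ge> 0" for n unfolding d_def h_def using hh_mono c by simp
  have h00: "h 0 = 1" unfolding h_def hh_def by simp
  have dsum: "d sums 1"
    using telescope_sums'[OF hh_lim[OF c, of 0, simplified]] unfolding d_def h_def h00[unfolded h_def]
    by simp
  define a where "a n = (-1)^n * h n" for n
  have sa: "summable a"
  proof (rule summable_comparison_test[OF _ summable_exp_sq[OF c]])
    show "\<exists>N. \<forall>n\<ge>N. norm (a n) \<le> exp (- c * (real n)\<^sup>2)"
      unfolding a_def h_def hh_def by (simp add: abs_mult)
  qed
  define A where "A = suminf a"
  have "(\<lambda>j. sum a {j * 2..<j * 2 + 2}) sums A"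
    using sums_group[OF summable_sums[OF sa], of 2] unfolding A_def by simp
  moreover have "sum a {j * 2..<j * 2 + 2} = d (2 * j)" for j
  proof -
    have "{j * 2..<j * 2 + 2} = {2*j, 2*j+1}" by auto
    then show ?thesis unfolding a_def d_def by simp
  qed
  ultimately have sA: "(\<lambda>j. d (2 * j)) sums A" by simp
  have "(\<lambda>j. sum d {j * 2..<j * 2 + 2}) sums 1"
    using sums_group[OF dsum, of 2] by simp
  moreover have "sum d {j * 2..<j * 2 + 2} = d (2 * j) + d (2 * j + 1)" for j
  proof -
    have "{j * 2..<j * 2 + 2} = {2*j, 2*j+1}" by auto
    then show ?thesis by simp
  qed
  ultimately have s1: "(\<lambda>j. d (2 * j) + d (2 * j + 1)) sums 1" by simp
  have sB: "(\<lambda>j. d (2 * j + 1)) sums (1 - A)"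
    using sums_diff[OF s1 sA] by simp
  define B where "B = 1 - A"
  have sBt: "(\<lambda>j. d (2 * (j + J) + 1)) sums (B - (\<Sum>j<J. d (2 * j + 1)))"
    using sums_split_initial_segment[OF sB[folded B_def], of J] by simp
  define Od where "Od = B - (\<Sum>j<J. d (2 * j + 1))"
  have OB: "Od \<le> B" unfolding Od_def using d0 by (simp add: sum_nonneg)
  have sO: "(\<lambda>j. d (2 * j + n0)) sums Od"
    using sBt[folded Od_def] unfolding n0_def by (simp add: algebra_simps)
  have "(\<lambda>m. h (m + n0) - h (Suc m + n0)) sums (h (0 + n0) - 0)"
    using telescope_sums'[of "\<lambda>m. h (m + n0)" 0] hh_lim[OF c, of n0] unfolding h_def by simp
  then have dt: "(\<lambda>m. d (m + n0)) sums h n0" unfolding d_def by simp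
  have "(\<lambda>j. sum (\<lambda>m. d (m + n0)) {j * 2..<j * 2 + 2}) sums h n0"
    using sums_group[OF dt, of 2] by simp
  moreover have "sum (\<lambda>m. d (m + n0)) {j * 2..<j * 2 + 2} = d (2 * j + n0) + d (2 * j + n0 + 1)" for j
  proof -
    have "{j * 2..<j * 2 + 2} = {2*j, 2*j+1}" by auto
    then show ?thesis by (simp add: algebra_simps)
  qed
  ultimately have s2: "(\<lambda>j. d (2 * j + n0) + d (2 * j + n0 + 1)) sums h n0" by simp
  have sE: "(\<lambda>j. d (2 * j + n0 + 1)) sums (h n0 - Od)"
    using sums_diff[OF s2 sO] by simp
  have "h n0 - Od \<le> Od"
  proof (rule sums_le[OF _ sE sO])
    fix j
    have "2 * j + n0 \<ge> 2 * J + 1" unfolding n0_def by simp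
    from sd[OF this] show "d (2 * j + n0 + 1) \<le> d (2 * j + n0)"
      unfolding d_def h_def by (simp add: algebra_simps)
  qed
  then have hB: "h n0 \<le> 2 * B" using OB by linarith
  have "summable (\<lambda>n. (-1)^n * hh c n)" using sa unfolding a_def h_def .
  then have "(\<Sum>n. (-1)^(Suc n) * hh c (Suc n)) = A - a 0"
    unfolding A_def a_def h_def by (subst suminf_split_head) simp_all
  also have "a 0 = 1" unfolding a_def using h00 by simp
  finally have "1 + 2 * (\<Sum>n. (-1)^(Suc n) * hh c (Suc n)) = 1 - 2 * B" unfolding B_def by simp
  then show ?thesis using hB unfolding h_def n0_def by simp
qed

lemma one_minus_cos_le: "1 - cos (x::real) \<le> x\<^sup>2 / 2"
proof -
  have "cos x = 1 - 2 * (sin (x/2))\<^sup>2" using cos_double_sin[of "x/2"] by simp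
  moreover have "(sin (x/2))\<^sup>2 \<le> (x/2)\<^sup>2"
    using abs_sin_x_le_abs_x[of "x/2"] by (metis abs_ge_zero power2_abs power_mono)
  ultimately show ?thesis by (simp add: power2_eq_square)
qed

lemma exp_174: "exp (-(174/100)::real) \<ge> 158/1000"
proof -
  have "exp (-(174/100)::real) = exp (-0.10875) ^ 16"
    using exp_of_nat_mult[of 16 "-0.10875::real"] by simp
  moreover have "(0.89125::real) ^ 16 \<le> exp (-0.10875) ^ 16"
    by (rule power_mono) (use exp_ge_add_one_self[of "-0.10875::real"] in auto)
  moreover have "(158/1000::real) \<le> 0.89125 ^ 16" by (simp add: numeral_eq_Suc)
  ultimately show ?thesis by linarith
qed

lemma choose_J:
  assumes c: "0 < c" "c \<le> 1/4"
  obtains J :: nat where "\<And>m. m \<ge> 2 * J + 1 \<Longrightarrow> (real m + 1)\<^sup>2 * c \<ge> 2/3"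
    and "c * (real (2 * J + 1))\<^sup>2 \<le> 174/100"
proof -
  define s where "s = sqrt (2 / (3 * c))"
  have s0: "s \<ge> 0" unfolding s_def using c by (simp add: less_imp_le)
  have ss: "s\<^sup>2 = 2 / (3 * c)" unfolding s_def using c by (simp add: less_imp_le)
  define J where "J = nat \<lfloor>s / 2\<rfloor>"
  have fl0: "\<lfloor>s / 2\<rfloor> \<ge> 0" using s0 by simp
  have J1: "real J \<le> s / 2" unfolding J_def using fl0 of_int_floor_le[of "s/2"] by simp
  have J2: "real J > s / 2 - 1" unfolding J_def using fl0 by linarith
  have A: "(real m + 1)\<^sup>2 * c \<ge> 2/3" if "m \<ge> 2 * J + 1" for m
  proof -
    have "real m \<ge> 2 * real J + 1" using that by linarith
    then have "real m + 1 \<ge> s" using J2 by linarith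
    then have "(real m + 1)\<^sup>2 \<ge> s\<^sup>2" using s0 by (simp add: power_mono)
    then have "(real m + 1)\<^sup>2 * c \<ge> s\<^sup>2 * c" using c by (simp add: mult_right_mono)
    moreover have "s\<^sup>2 * c = 2/3" unfolding ss using c by simp
    ultimately show ?thesis by simp
  qed
  have cs2: "(c * s)\<^sup>2 = 2 * c / 3" using ss c by (simp add: power_mult_distrib power2_eq_square field_simps)
  have "(c * s)\<^sup>2 \<le> (0.40825)\<^sup>2" using c cs2 by (simp only: cs2) (simp add: power2_eq_square)
  then have cs: "c * s \<le> 0.40825" using c s0 by (simp add: power2_le_iff_abs_le)
  have n0: "real (2 * J + 1) \<le> s + 1" using J1 by simp
  have "(real (2 * J + 1))\<^sup>2 \<le> (s + 1)\<^sup>2" using n0 by (simp add: power_mono)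
  then have "c * (real (2 * J + 1))\<^sup>2 \<le> c * (s + 1)\<^sup>2" using c by (simp add: mult_left_mono)
  also have "c * (s + 1)\<^sup>2 = s\<^sup>2 * c + 2 * (c * s) + c" by (simp add: power2_eq_square algebra_simps)
  also have "\<dots> \<le> 174/100" using ss c cs by simp
  finally show ?thesis using that A by blast
qed

lemma key_ineq:
  fixes c :: real
  assumes c: "c > 0"
  shows "(real (Suc n))\<^sup>2 * hh c (Suc n) \<le> (2 / c) * exp (-c/2) ^ n"
proof -
  define K where "K = (real (Suc n))\<^sup>2"
  define z where "z = c * K / 2"
  have K1: "K \<ge> real n" unfolding K_def
    using mult_nonneg_nonneg[of "real n" "real n"] by (simp add: power2_eq_square algebra_simps)
  have z0: "z \<ge> 0" unfolding z_def K_def using c by simp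
  have zz: "z * exp (-z) \<le> 1"
  proof -
    have "z \<le> exp z" using exp_ge_add_one_self[of z] by linarith
    then show ?thesis by (simp add: exp_minus field_simps)
  qed
  have "K * hh c (Suc n) = K * exp (-z) * exp (-z)"
    unfolding hh_def z_def K_def by (simp add: exp_add[symmetric])
  also have "\<dots> = (2 / c) * (z * exp (-z)) * exp (-z)" unfolding z_def using c by (simp add: field_simps)
  also have "\<dots> \<le> (2 / c) * 1 * exp (-z)"
    using zz c by (intro mult_right_mono mult_left_mono) auto
  also have "exp (-z) \<le> exp (-c/2) ^ n"
  proof -
    have "c * real n / 2 \<le> z" unfolding z_def using K1 c by (simp add: mult_left_mono divide_right_mono)
    then have "exp (-z) \<le> exp (real n * (-c/2))" by (simp add: mult.commute)
    also have "\<dots> = exp (-c/2) ^ n" by (rule exp_of_nat_mult)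
    finally show ?thesis .
  qed
  then have "(2 / c) * exp (-z) \<le> (2 / c) * exp (-c/2) ^ n" by (rule mult_left_mono) (use c in simp)
  then have "(2 / c) * 1 * exp (-z) \<le> (2 / c) * exp (-c/2) ^ n" by simp
  finally show ?thesis unfolding K_def .
qed

lemma geom_half:
  fixes c :: real
  assumes c: "c > 0"
  shows "1 / (1 - exp (-c/2)) \<le> 2 / c + 1" and "exp (-c/2) < 1"
proof -
  have "1 + c/2 \<le> exp (c/2)" by (rule exp_ge_add_one_self)
  then have r: "exp (-c/2) \<le> 1 / (1 + c/2)" using c by (simp add: exp_minus field_simps)
  then have "1 - exp (-c/2) \<ge> (c/2) / (1 + c/2)" using c by (simp add: field_simps)
  moreover have p2: "(c/2) / (1 + c/2) > 0" using c by simp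
  moreover have "0 < (1 - exp (-c/2)) * ((c/2) / (1 + c/2))"
    by (rule mult_pos_pos) (use c p2 in simp_all)
  ultimately have "1 / (1 - exp (-c/2)) \<le> 1 / ((c/2) / (1 + c/2))"
    by (intro divide_left_mono) auto
  also have "\<dots> = 2 / c + 1" using c by (simp add: field_simps)
  finally show "1 / (1 - exp (-c/2)) \<le> 2 / c + 1" .
  show "exp (-c/2) < 1" using c by simp
qed

lemma E_part:
  assumes c: "c > 0"
  shows "\<bar>SS c t - (\<Sum>n. (-1)^(Suc n) * hh c (Suc n))\<bar> \<le> t\<^sup>2 * (2 / c\<^sup>2 + 1 / c)"
proof -
  define r where "r = exp (-c/2)"
  have r0: "0 < r" "r < 1" using geom_half(2)[OF c] unfolding r_def by auto
  define q where "q n = t\<^sup>2 / 2 * ((2 / c) * r ^ n)" for n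
  have qs: "q sums (t\<^sup>2 / 2 * ((2 / c) * (1 / (1 - r))))"
    unfolding q_def by (intro sums_mult geometric_sums) (use r0 in auto)
  define e where "e n = (-1)^(Suc n) * hh c (Suc n) * (cos (real (Suc n) * t) - 1)" for n
  have eb: "\<bar>e n\<bar> \<le> q n" for n
  proof -
    have "\<bar>e n\<bar> = hh c (Suc n) * (1 - cos (real (Suc n) * t))"
      unfolding e_def hh_def by (simp add: abs_mult)
    also have "\<dots> \<le> hh c (Suc n) * ((real (Suc n) * t)\<^sup>2 / 2)"
      by (rule mult_left_mono[OF one_minus_cos_le]) (simp add: hh_def)
    also have "\<dots> = t\<^sup>2 / 2 * ((real (Suc n))\<^sup>2 * hh c (Suc n))" by (simp add: power_mult_distrib)
    also have "\<dots> \<le> t\<^sup>2 / 2 * ((2 / c) * r ^ n)"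
      by (rule mult_left_mono[OF key_ineq[OF c, folded r_def]]) simp
    finally show ?thesis unfolding q_def .
  qed
  have sq: "summable q" using qs by (rule sums_summable)
  have se: "summable (\<lambda>n. \<bar>e n\<bar>)"
    by (rule summable_comparison_test[OF _ sq]) (use eb in auto)
  have s1: "summable (\<lambda>n. ww c t (Suc n))" using summable_ww_shift[OF c, of t 1] by simp
  have s2: "summable (\<lambda>n. (-1)^(Suc n) * hh c (Suc n))"
  proof (rule summable_comparison_test[OF _ summable_ignore_initial_segment[OF summable_exp_sq[OF c], of 1]])
    show "\<exists>N. \<forall>n\<ge>N. norm ((-1)^(Suc n) * hh c (Suc n)) \<le> exp (- c * (real (n + 1))\<^sup>2)"
      unfolding hh_def by (simp add: abs_mult)
  qed
  have "SS c t - (\<Sum>n. (-1)^(Suc n) * hh c (Suc n)) = (\<Sum>n. ww c t (Suc n) - (-1)^(Suc n) * hh c (Suc n))"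
    unfolding SS_def using suminf_diff[OF s1 s2] by simp
  also have "(\<lambda>n. ww c t (Suc n) - (-1)^(Suc n) * hh c (Suc n)) = e"
    unfolding e_def ww_def hh_def by (rule ext) (simp add: algebra_simps)
  finally have eq: "SS c t - (\<Sum>n. (-1)^(Suc n) * hh c (Suc n)) = suminf e" .
  have "\<bar>suminf e\<bar> \<le> (\<Sum>n. \<bar>e n\<bar>)" by (rule summable_rabs[OF se])
  also have "\<dots> \<le> suminf q" by (rule suminf_le[OF _ se sq]) (use eb in auto)
  also have "suminf q = t\<^sup>2 / 2 * ((2 / c) * (1 / (1 - r)))" using sums_unique[OF qs] by simp
  also have "\<dots> \<le> t\<^sup>2 / 2 * ((2 / c) * (2 / c + 1))"
    using geom_half(1)[OF c, folded r_def] c by (intro mult_left_mono) auto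
  also have "\<dots> = t\<^sup>2 * (2 / c\<^sup>2 + 1 / c)" using c by (simp add: power2_eq_square field_simps)
  finally show ?thesis unfolding eq .
qed

lemma small_c_bound:
  assumes c: "0 < c" "c \<le> 1/4" and t: "\<bar>t\<bar> \<le> c\<^sup>2 / 12"
  shows "1 + 2 * SS c t \<le> 17/20"
proof -
  obtain J :: nat where J1: "\<And>m. m \<ge> 2 * J + 1 \<Longrightarrow> (real m + 1)\<^sup>2 * c \<ge> 2/3"
    and J2: "c * (real (2 * J + 1))\<^sup>2 \<le> 174/100"
    using choose_J[OF c] by blast
  have sd: "hh c (m+1) - hh c (m+2) \<le> hh c m - hh c (m+1)" if "m \<ge> 2 * J + 1" for m
    using second_diff[OF c J1[OF that]] unfolding hh_def by simp
  have P: "1 + 2 * (\<Sum>n. (-1)^(Suc n) * hh c (Suc n)) \<le> 1 - hh c (2 * J + 1)"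
    by (rule alt_bound[OF c(1) sd])
  have "hh c (2 * J + 1) \<ge> exp (-(174/100))" unfolding hh_def using J2 by simp
  then have h: "hh c (2 * J + 1) \<ge> 158/1000" using exp_174 by linarith
  have Eb: "\<bar>SS c t - (\<Sum>n. (-1)^(Suc n) * hh c (Suc n))\<bar> \<le> t\<^sup>2 * (2 / c\<^sup>2 + 1 / c)"
    by (rule E_part[OF c(1)])
  have "t\<^sup>2 \<le> (c\<^sup>2 / 12)\<^sup>2" using t by (metis abs_ge_zero power2_abs power_mono)
  then have "t\<^sup>2 * (2 / c\<^sup>2 + 1 / c) \<le> (c\<^sup>2 / 12)\<^sup>2 * (2 / c\<^sup>2 + 1 / c)"
    using c by (intro mult_right_mono) auto
  also have "\<dots> = (2 * c\<^sup>2 + c ^ 3) / 144" using c by (simp add: power2_eq_square power3_eq_cube field_simps)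
  also have "\<dots> \<le> (2 * (1/4)\<^sup>2 + (1/4) ^ 3) / 144"
    using c by (intro divide_right_mono add_mono mult_left_mono power_mono) auto
  also have "(2 * (1/4)\<^sup>2 + (1/4) ^ 3) / 144 \<le> (1/1000::real)" by (simp add: power2_eq_square power3_eq_cube)
  finally have "t\<^sup>2 * (2 / c\<^sup>2 + 1 / c) \<le> 1/1000" .
  then show ?thesis using P h Eb by linarith
qed

lemma cos_lipschitz: "\<bar>cos u - cos v\<bar> \<le> \<bar>u - (v::real)\<bar>"
proof -
  have "\<bar>cos u - cos v\<bar> = 2 * \<bar>sin ((u + v) / 2)\<bar> * \<bar>sin ((v - u) / 2)\<bar>"
    by (simp add: cos_diff_cos abs_mult)
  also have "\<dots> \<le> 2 * 1 * \<bar>(v - u) / 2\<bar>"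
    by (intro mult_mono abs_sin_x_le_abs_x) auto
  finally show ?thesis by simp
qed

lemma exp_diff_le:
  fixes A y0 y :: real
  assumes "A \<ge> 0" "0 < y0" "y0 \<le> y"
  shows "exp (- A / y) - exp (- A / y0) \<le> exp (- A / y) * (A * (y - y0) / y0\<^sup>2)"
    and "exp (- A / y0) \<le> exp (- A / y)"
proof -
  have yp: "y > 0" using assms by linarith
  have d: "1 / y0 - 1 / y = (y - y0) / (y * y0)" using assms yp by (simp add: field_simps)
  have d0: "1 / y0 - 1 / y \<ge> 0" using assms by (simp add: frac_le)
  have dle: "(y - y0) / (y * y0) \<le> (y - y0) / y0\<^sup>2"
    using assms by (intro divide_left_mono) (auto simp: power2_eq_square intro: mult_right_mono)
  have "exp (- A / y0) = exp (- A / y) * exp (- (A * (1 / y0 - 1 / y)))"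
    by (simp add: exp_add[symmetric] algebra_simps)
  moreover have "exp (- (A * (1 / y0 - 1 / y))) \<ge> 1 - A * (1 / y0 - 1 / y)"
    using exp_ge_add_one_self[of "- (A * (1 / y0 - 1 / y))"] by simp
  ultimately have "exp (- A / y0) \<ge> exp (- A / y) * (1 - A * (1 / y0 - 1 / y))"
    by (simp add: mult_left_mono)
  moreover have "exp (- A / y) * (1 - A * (1 / y0 - 1 / y)) = exp (- A / y) - exp (- A / y) * (A * (1 / y0 - 1 / y))"
    by (simp add: right_diff_distrib)
  ultimately have "exp (- A / y) - exp (- A / y0) \<le> exp (- A / y) * (A * (1 / y0 - 1 / y))"
    by linarith
  also have "\<dots> \<le> exp (- A / y) * (A * ((y - y0) / y0\<^sup>2))"
  proof -
    have "A * ((y - y0) / (y * y0)) \<le> A * ((y - y0) / y0\<^sup>2)" by (rule mult_left_mono[OF dle assms(1)])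
    then show ?thesis unfolding d by (rule mult_left_mono) simp
  qed
  finally show "exp (- A / y) - exp (- A / y0) \<le> exp (- A / y) * (A * (y - y0) / y0\<^sup>2)" by simp
  have "A / y \<le> A / y0" by (rule divide_left_mono) (use assms yp in auto)
  then show "exp (- A / y0) \<le> exp (- A / y)" by simp
qed

lemma theta_diff:
  fixes y0 y :: real
  assumes "0 < y0" "y0 \<le> y"
  shows "0 \<le> pi / (4 * y0\<^sup>2) - pi / (4 * y\<^sup>2)"
    and "pi / (4 * y0\<^sup>2) - pi / (4 * y\<^sup>2) \<le> pi / 2 * (y - y0) / y0 ^ 3"
proof -
  have yp: "y > 0" using assms by linarith
  have e: "pi / (4 * y0\<^sup>2) - pi / (4 * y\<^sup>2) = pi / 4 * ((1 / y0 - 1 / y) * (1 / y0 + 1 / y))"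
    using assms yp by (simp add: field_simps power2_eq_square)
  have d: "1 / y0 - 1 / y = (y - y0) / (y * y0)" using assms yp by (simp add: field_simps)
  have d0: "0 \<le> 1 / y0 - 1 / y" using assms yp by (simp add: frac_le)
  have d1: "1 / y0 - 1 / y \<le> (y - y0) / y0\<^sup>2"
    unfolding d using assms yp by (intro divide_left_mono) (auto simp: power2_eq_square intro: mult_right_mono)
  have "1 / y \<le> 1 / y0" by (rule divide_left_mono) (use assms yp in auto)
  then have s1: "1 / y0 + 1 / y \<le> 2 / y0" by simp
  have s0: "0 \<le> 1 / y0 + 1 / y" using assms yp by simp
  show "0 \<le> pi / (4 * y0\<^sup>2) - pi / (4 * y\<^sup>2)" unfolding e using d0 s0 by simp
  have "(1 / y0 - 1 / y) * (1 / y0 + 1 / y) \<le> ((y - y0) / y0\<^sup>2) * (2 / y0)"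
    by (rule mult_mono[OF d1 s1]) (use assms s0 in auto)
  also have "\<dots> = 2 * (y - y0) / y0 ^ 3" using assms by (simp add: power2_eq_square power3_eq_cube field_simps)
  finally have "pi / 4 * ((1 / y0 - 1 / y) * (1 / y0 + 1 / y)) \<le> pi / 4 * (2 * (y - y0) / y0 ^ 3)"
    by (rule mult_left_mono) simp
  also have "pi / 4 * (2 * (y - y0) / y0 ^ 3) = pi / 2 * (y - y0) / y0 ^ 3" using assms by (simp add: field_simps)
  finally show "pi / (4 * y0\<^sup>2) - pi / (4 * y\<^sup>2) \<le> pi / 2 * (y - y0) / y0 ^ 3" unfolding e by simp
qed

lemma per_term:
  fixes a y0 y :: real
  assumes a: "a \<ge> 0" and y: "0 < y0" "y0 \<le> y" "y \<le> 3/2"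
  shows "\<bar>ww (a / y) (pi / (4 * y\<^sup>2)) m - ww (a / y0) (pi / (4 * y0\<^sup>2)) m\<bar>
         \<le> (y - y0) * (exp (- (2 * a / 3) * (real m)\<^sup>2) * ((real m)\<^sup>2 * (a / y0\<^sup>2 + pi / (2 * y0 ^ 3))))"
proof -
  have yp: "y > 0" using y by linarith
  define A where "A = a * (real m)\<^sup>2"
  have A0: "A \<ge> 0" unfolding A_def using a by simp
  define e where "e = exp (- A / y)"
  define e0 where "e0 = exp (- A / y0)"
  define E where "E = exp (- (2 * a / 3) * (real m)\<^sup>2)"
  define g where "g = cos (real m * (pi / (4 * y\<^sup>2)))"
  define g0 where "g0 = cos (real m * (pi / (4 * y0\<^sup>2)))"
  have w: "ww (a / y) (pi / (4 * y\<^sup>2)) m = (-1)^m * e * g"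
    unfolding ww_def e_def g_def A_def by simp
  have w0: "ww (a / y0) (pi / (4 * y0\<^sup>2)) m = (-1)^m * e0 * g0"
    unfolding ww_def e0_def g0_def A_def by simp
  have ed: "e - e0 \<le> e * (A * (y - y0) / y0\<^sup>2)" and e0e: "e0 \<le> e"
    unfolding e_def e0_def using exp_diff_le[OF A0 y(1,2)] by auto
  have eE: "e \<le> E"
  proof -
    have "A * (2/3) \<le> A / y" using A0 y yp by (simp add: field_simps mult_left_mono)
    then show ?thesis unfolding e_def E_def A_def by (simp add: algebra_simps)
  qed
  have e0p: "e0 \<ge> 0" unfolding e0_def by simp
  have gd: "\<bar>g - g0\<bar> \<le> real m * (pi / 2 * (y - y0) / y0 ^ 3)"
  proof -
    have "\<bar>g - g0\<bar> \<le> \<bar>real m * (pi / (4 * y\<^sup>2)) - real m * (pi / (4 * y0\<^sup>2))\<bar>"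
      unfolding g_def g0_def by (rule cos_lipschitz)
    also have "\<dots> = real m * (pi / (4 * y0\<^sup>2) - pi / (4 * y\<^sup>2))"
    proof -
      have nn: "0 \<le> real m * (pi / (4 * y0\<^sup>2) - pi / (4 * y\<^sup>2))"
        using theta_diff(1)[OF y(1,2)] by simp
      have "real m * (pi / (4 * y\<^sup>2)) - real m * (pi / (4 * y0\<^sup>2)) = - (real m * (pi / (4 * y0\<^sup>2) - pi / (4 * y\<^sup>2)))"
        by (simp only: right_diff_distrib minus_diff_eq)
      then show ?thesis using nn by (metis abs_minus_cancel abs_of_nonneg)
    qed
    also have "\<dots> \<le> real m * (pi / 2 * (y - y0) / y0 ^ 3)"
      by (rule mult_left_mono[OF theta_diff(2)[OF y(1,2)]]) simp
    finally show ?thesis .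
  qed
  have "(-1)^m * e * g - (-1)^m * e0 * g0 = (-1)^m * ((e - e0) * g + e0 * (g - g0))"
    by (simp add: algebra_simps)
  then have "\<bar>(-1)^m * e * g - (-1)^m * e0 * g0\<bar> = \<bar>(e - e0) * g + e0 * (g - g0)\<bar>"
    by (simp only: abs_mult power_abs abs_neg_one power_one mult_1)
  also have "\<dots> \<le> \<bar>(e - e0) * g\<bar> + \<bar>e0 * (g - g0)\<bar>" by (rule abs_triangle_ineq)
  also have "\<bar>(e - e0) * g\<bar> \<le> e - e0"
  proof -
    have "\<bar>g\<bar> \<le> 1" unfolding g_def by simp
    then show ?thesis using e0e by (simp add: abs_mult mult_left_le)
  qed
  also have "\<bar>e0 * (g - g0)\<bar> \<le> E * (real m * (pi / 2 * (y - y0) / y0 ^ 3))"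
  proof -
    have "e0 * \<bar>g - g0\<bar> \<le> E * (real m * (pi / 2 * (y - y0) / y0 ^ 3))"
      by (rule mult_mono[OF _ gd]) (use e0p e0e eE in auto)
    then show ?thesis using e0p by (simp only: abs_mult abs_of_nonneg)
  qed
  also have "e - e0 \<le> E * (A * (y - y0) / y0\<^sup>2)"
    using ed eE A0 y by (smt (verit) divide_nonneg_nonneg mult_right_mono zero_le_power2 mult_nonneg_nonneg)
  finally have main: "\<bar>(-1)^m * e * g - (-1)^m * e0 * g0\<bar> \<le>
      E * (A * (y - y0) / y0\<^sup>2) + E * (real m * (pi / 2 * (y - y0) / y0 ^ 3))" by simp
  have mm: "real m \<le> (real m)\<^sup>2" by (cases m) (auto simp: power2_eq_square)
  have "E * (A * (y - y0) / y0\<^sup>2) + E * (real m * (pi / 2 * (y - y0) / y0 ^ 3))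
      = (y - y0) * E * ((real m)\<^sup>2 * (a / y0\<^sup>2) + real m * (pi / (2 * y0 ^ 3)))"
    unfolding A_def by (simp add: field_simps)
  also have "\<dots> \<le> (y - y0) * E * ((real m)\<^sup>2 * (a / y0\<^sup>2) + (real m)\<^sup>2 * (pi / (2 * y0 ^ 3)))"
    using mm y a by (intro mult_left_mono add_left_mono mult_right_mono) (auto simp: E_def)
  finally have F: "E * (A * (y - y0) / y0\<^sup>2) + E * (real m * (pi / 2 * (y - y0) / y0 ^ 3))
      \<le> (y - y0) * E * ((real m)\<^sup>2 * (a / y0\<^sup>2) + (real m)\<^sup>2 * (pi / (2 * y0 ^ 3)))" .
  have R: "(y - y0) * E * ((real m)\<^sup>2 * (a / y0\<^sup>2) + (real m)\<^sup>2 * (pi / (2 * y0 ^ 3)))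
      = (y - y0) * (E * ((real m)\<^sup>2 * (a / y0\<^sup>2 + pi / (2 * y0 ^ 3))))" by (simp add: algebra_simps)
  show ?thesis unfolding w w0 E_def[symmetric] using main F R by linarith
qed

lemma pow2_bound: "real n + 2 \<le> 2 ^ (n + 1)"
proof (induction n)
  case 0 then show ?case by simp
next
  case (Suc n) then show ?case by simp
qed

lemma sq_exp_geom:
  fixes a :: real
  assumes "a \<ge> 0"
  shows "exp (- (2 * a / 3) * (real (n + 2))\<^sup>2) * (real (n + 2))\<^sup>2
         \<le> 4 * exp (- (2 * a / 3)) ^ 4 * (4 * exp (- (2 * a / 3))) ^ n"
proof -
  define r where "r = exp (- (2 * a / 3))"
  have r0: "r > 0" unfolding r_def by simp
  have "(real (n + 2))\<^sup>2 \<le> (2 ^ (n + 1))\<^sup>2"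
    using pow2_bound[of n] by (intro power_mono) auto
  also have "((2::real) ^ (n + 1))\<^sup>2 = (2\<^sup>2) ^ (n + 1)"
    by (simp only: power_mult[symmetric] mult.commute)
  also have "\<dots> = (4::real) * 4 ^ n" by simp
  finally have s: "(real (n + 2))\<^sup>2 \<le> 4 * 4 ^ n" .
  have "real (n + 4) \<le> (real (n + 2))\<^sup>2"
    using mult_nonneg_nonneg[of "real n" "real n"] by (simp add: power2_eq_square algebra_simps)
  then have "- (2 * a / 3) * (real (n + 2))\<^sup>2 \<le> real (n + 4) * (- (2 * a / 3))"
    using assms by (simp add: mult_left_mono mult.commute)
  then have "exp (- (2 * a / 3) * (real (n + 2))\<^sup>2) \<le> exp (real (n + 4) * (- (2 * a / 3)))" by simp
  also have "\<dots> = r ^ (n + 4)" unfolding r_def by (rule exp_of_nat_mult)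
  finally have e: "exp (- (2 * a / 3) * (real (n + 2))\<^sup>2) \<le> r ^ 4 * r ^ n" by (simp add: power_add mult.commute)
  have "exp (- (2 * a / 3) * (real (n + 2))\<^sup>2) * (real (n + 2))\<^sup>2 \<le> (r ^ 4 * r ^ n) * (4 * 4 ^ n)"
    by (rule mult_mono[OF e s]) (use r0 in auto)
  also have "\<dots> = 4 * r ^ 4 * (4 * r) ^ n" by (simp add: power_mult_distrib)
  finally show ?thesis unfolding r_def .
qed

lemma region1:
  fixes a y0 y :: real
  assumes a: "a \<ge> pi" and y: "433/500 \<le> y0" "y0 \<le> 9/8" "y0 \<le> y" "y \<le> 3/2"
    and cos0: "cos (pi / (4 * y0\<^sup>2)) \<ge> 1/2"
    and ex: "exp (a * (8/3 - 1 / y0)) \<ge> 72"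
  shows "SS (a / y) (pi / (4 * y\<^sup>2)) \<le> SS (a / y0) (pi / (4 * y0\<^sup>2))"
proof -
  have "(3141592653588 / 10^12::real) \<ge> 157/50" by simp
  then have pi3: "157/50 \<le> pi" using pi_approx(1) by linarith
  have a0: "a \<ge> 0" "a > 0" using a pi_gt_zero by linarith+
  have y00: "y0 > 0" using y by linarith
  have yp: "y > 0" using y by linarith
  define c where "c = a / y"
  define t where "t = pi / (4 * y\<^sup>2)"
  define c0 where "c0 = a / y0"
  define t0 where "t0 = pi / (4 * y0\<^sup>2)"
  have cp: "c > 0" "c0 > 0" unfolding c_def c0_def using a0 yp y00 by auto
  define K where "K = a / y0\<^sup>2 + pi / (2 * y0 ^ 3)"
  define r where "r = exp (- (2 * a / 3))"
  have r0: "r > 0" unfolding r_def by simp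
  have r15: "r \<le> 3/20"
  proof -
    have "1 + pi/3 + (pi/3)\<^sup>2 / 2 \<le> exp (pi/3)" by (rule exp_lower_Taylor_quadratic) simp
    moreover have "2594/1000 \<le> 1 + pi/3 + (pi/3)\<^sup>2 / 2"
    proof -
      have "(157/50/3)\<^sup>2 \<le> (pi/3)\<^sup>2" using pi3 by (intro power_mono) auto
      then show ?thesis using pi3 by (simp add: power2_eq_square)
    qed
    ultimately have e1: "2594/1000 \<le> exp (pi/3)" by linarith
    have "(2594/1000::real)\<^sup>2 \<le> (exp (pi/3))\<^sup>2" using e1 by (intro power_mono) auto
    also have "(exp (pi/3))\<^sup>2 = exp (2 * pi / 3)" by (simp add: power2_eq_square exp_add[symmetric])
    also have "exp (2 * pi / 3) \<le> exp (2 * a / 3)" using a by simp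
    finally have "exp (2 * a / 3) \<ge> 20/3" by (simp add: power2_eq_square)
    then show ?thesis unfolding r_def by (simp add: exp_minus field_simps)
  qed
  have r4: "4 * r < 1" using r15 by simp
  define D where "D n = ww c t (n + 2) - ww c0 t0 (n + 2)" for n
  define q where "q n = (y - y0) * K * (4 * r ^ 4 * (4 * r) ^ n)" for n
  have K0: "K \<ge> 0" unfolding K_def using a0 y00 by simp
  have Db: "\<bar>D n\<bar> \<le> q n" for n
  proof -
    have "\<bar>D n\<bar> \<le> (y - y0) * (exp (- (2 * a / 3) * (real (n+2))\<^sup>2) * ((real (n+2))\<^sup>2 * K))"
      unfolding D_def c_def t_def c0_def t0_def K_def using per_term[OF a0(1) y00 y(3,4), of "n+2"] by simp
    also have "\<dots> = (y - y0) * K * (exp (- (2 * a / 3) * (real (n+2))\<^sup>2) * (real (n+2))\<^sup>2)"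
      by (simp add: algebra_simps)
    also have "\<dots> \<le> (y - y0) * K * (4 * r ^ 4 * (4 * r) ^ n)"
      unfolding r_def by (rule mult_left_mono[OF sq_exp_geom[OF a0(1)]]) (use K0 y in simp)
    finally show ?thesis unfolding q_def .
  qed
  have qs: "q sums ((y - y0) * K * (4 * r ^ 4 * (1 / (1 - 4 * r))))"
    unfolding q_def by (intro sums_mult geometric_sums) (use r0 r4 in auto)
  have sq: "summable q" using qs by (rule sums_summable)
  have sD: "summable (\<lambda>n. \<bar>D n\<bar>)" by (rule summable_comparison_test[OF _ sq]) (use Db in auto)
  have "(\<Sum>n. ww c t (n + 2)) - (\<Sum>n. ww c0 t0 (n + 2)) = suminf D"
    unfolding D_def by (rule suminf_diff[OF summable_ww_shift[OF cp(1), of t 2] summable_ww_shift[OF cp(2), of t0 2]])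
  also have "\<dots> \<le> (\<Sum>n. \<bar>D n\<bar>)" using summable_rabs[OF sD] by linarith
  also have "\<dots> \<le> suminf q" by (rule suminf_le[OF _ sD sq]) (use Db in auto)
  also have "\<dots> = (y - y0) * K * (4 * r ^ 4 * (1 / (1 - 4 * r)))" using sums_unique[OF qs] by simp
  finally have tail: "(\<Sum>n. ww c t (n + 2)) - (\<Sum>n. ww c0 t0 (n + 2)) \<le> (y - y0) * K * (4 * r ^ 4 * (1 / (1 - 4 * r)))" .
  define e where "e = exp (- a / y)"
  define e0 where "e0 = exp (- a / y0)"
  have t00: "0 \<le> t" "t \<le> t0" "t0 \<le> pi"
  proof -
    show "0 \<le> t" unfolding t_def by simp
    show "t \<le> t0" using theta_diff(1)[OF y00 y(3)] unfolding t_def t0_def by simp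
    have "y0\<^sup>2 \<ge> 1/4"
    proof -
      have "(1/2)\<^sup>2 \<le> y0\<^sup>2" using y by (intro power_mono) auto
      then show ?thesis by (simp add: power2_eq_square)
    qed
    then have "4 * y0\<^sup>2 \<ge> 1" by simp
    then show "t0 \<le> pi" unfolding t0_def by (simp add: divide_le_eq)
  qed
  have ct: "cos t \<ge> cos t0" using cos_mono_le_eq[of t0 t] t00 by linarith
  have edd: "e - e0 \<ge> e0 * (a * (y - y0) * (16/27))"
  proof -
    have d: "1 / y0 - 1 / y = (y - y0) / (y * y0)" using y00 yp by (simp add: field_simps)
    have yy: "y * y0 \<le> 27/16" using mult_mono[of y "3/2" y0 "9/8"] y y00 by simp
    have "(y - y0) * (16/27) \<le> (y - y0) / (y * y0)"
    proof -
      have "(y - y0) / (27/16) \<le> (y - y0) / (y * y0)"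
        by (rule divide_left_mono[OF yy]) (use y y00 yp in auto)
      then show ?thesis by simp
    qed
    then have dd: "a * ((y - y0) * (16/27)) \<le> a * (1 / y0 - 1 / y)" unfolding d by (rule mult_left_mono) (use a0 in simp)
    have "e = e0 * exp (a * (1 / y0 - 1 / y))"
      unfolding e_def e0_def by (simp add: exp_add[symmetric] algebra_simps)
    moreover have "exp (a * (1 / y0 - 1 / y)) \<ge> 1 + a * ((y - y0) * (16/27))"
      using exp_ge_add_one_self[of "a * (1 / y0 - 1 / y)"] dd by linarith
    ultimately have "e \<ge> e0 * (1 + a * ((y - y0) * (16/27)))"
      unfolding e0_def by (simp add: mult_left_mono)
    then show ?thesis by (simp add: algebra_simps)
  qed
  have "e0 * (a * (y - y0) * (16/27)) \<ge> 0"
    by (intro mult_nonneg_nonneg) (use a0 y in \<open>auto simp: e0_def\<close>)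
  then have e0e: "e0 \<le> e" using edd by linarith
  have first: "ww c t 1 - ww c0 t0 1 \<le> - (e - e0) / 2"
  proof -
    have "ww c t 1 - ww c0 t0 1 = - e * cos t + e0 * cos t0"
      unfolding ww_1 c_def c0_def e_def e0_def by simp
    also have "\<dots> \<le> - e * cos t0 + e0 * cos t0"
    proof -
      have "e * cos t0 \<le> e * cos t" by (rule mult_left_mono[OF ct]) (simp add: e_def)
      then show ?thesis by linarith
    qed
    also have "\<dots> = - (e - e0) * cos t0" by (simp add: algebra_simps)
    also have "\<dots> \<le> - (e - e0) * (1/2)"
      using cos0 e0e unfolding t0_def by (intro mult_left_mono_neg) auto
    finally show ?thesis by simp
  qed
  have split: "SS c t - SS c0 t0 = (ww c t 1 - ww c0 t0 1) + ((\<Sum>n. ww c t (n + 2)) - (\<Sum>n. ww c0 t0 (n + 2)))"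
    using SS_split[OF cp(1), of t] SS_split[OF cp(2), of t0] by simp
  have Kb: "K \<le> 53/25 * a"
  proof -
    have "y0\<^sup>2 \<ge> 7499/10000"
    proof -
      have "(433/500)\<^sup>2 \<le> y0\<^sup>2" using y by (intro power_mono) auto
      then show ?thesis by (simp add: power2_eq_square)
    qed
    then have k1: "a / y0\<^sup>2 \<le> a / (7499/10000)" using a0 by (intro divide_left_mono) auto
    have "y0 ^ 3 \<ge> 3247/5000"
    proof -
      have "(433/500) ^ 3 \<le> y0 ^ 3" using y by (intro power_mono) auto
      then show ?thesis by (simp add: power3_eq_cube)
    qed
    then have "pi / (2 * y0 ^ 3) \<le> a / (2 * 3247/5000)" using a a0 by (intro frac_le) auto
    then show ?thesis unfolding K_def using k1 a0 by simp
  qed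
  have numeric: "(y - y0) * K * (4 * r ^ 4 * (1 / (1 - 4 * r))) \<le> (y - y0) * (e0 * a * (8/27))"
  proof -
    have h25: "1 / (1 - 4 * r) \<le> 5/2" using r15 r4 by (simp add: field_simps)
    have i1: "4 * r ^ 4 * (1 / (1 - 4 * r)) \<le> 4 * r ^ 4 * (5/2)"
      by (rule mult_left_mono[OF h25]) (use r0 in simp)
    have i2: "0 \<le> 4 * r ^ 4 * (1 / (1 - 4 * r))" using r0 r4 by simp
    have "K * (4 * r ^ 4 * (1 / (1 - 4 * r))) \<le> (53/25 * a) * (4 * r ^ 4 * (5/2))"
      by (rule mult_mono[OF Kb i1]) (use a0 i2 in auto)
    also have "\<dots> = 106/5 * a * r ^ 4" by simp
    also have "\<dots> \<le> e0 * a * (8/27)"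
    proof -
      have "r ^ 4 * exp (a * (8/3 - 1 / y0)) = e0"
        unfolding r_def e0_def by (simp add: exp_of_nat_mult[symmetric] exp_add[symmetric] algebra_simps)
      moreover have "r ^ 4 * 72 \<le> r ^ 4 * exp (a * (8/3 - 1 / y0))"
        by (rule mult_left_mono[OF ex]) (use r0 in simp)
      ultimately have "r ^ 4 * 72 \<le> e0" by simp
      then have "106/5 * r ^ 4 \<le> e0 * (8/27)" using zero_le_power[of r 4] r0 by linarith
      then have "(106/5 * r ^ 4) * a \<le> (e0 * (8/27)) * a" by (rule mult_right_mono) (use a0 in simp)
      then show ?thesis by (simp add: algebra_simps)
    qed
    finally have "K * (4 * r ^ 4 * (1 / (1 - 4 * r))) \<le> e0 * a * (8/27)" .
    then have "(y - y0) * (K * (4 * r ^ 4 * (1 / (1 - 4 * r)))) \<le> (y - y0) * (e0 * a * (8/27))"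
      by (rule mult_left_mono) (use y in simp)
    then show ?thesis by (simp only: mult.assoc)
  qed
  define P where "P = (y - y0) * (e0 * a * (8/27))"
  have "(y - y0) * (e0 * a * (16/27)) = 2 * P" unfolding P_def by simp
  then have Q: "2 * P \<le> e - e0" using edd by (simp add: algebra_simps)
  define U where "U = ww c t 1 - ww c0 t0 1"
  define V where "V = (\<Sum>n. ww c t (n + 2)) - (\<Sum>n. ww c0 t0 (n + 2))"
  have U: "U \<le> - (e - e0) / 2" using first unfolding U_def .
  have V: "V \<le> P" using tail numeric unfolding V_def P_def by linarith
  have "SS c t - SS c0 t0 = U + V" using split unfolding U_def V_def .
  define Dl where "Dl = e - e0"
  have "SS c t - SS c0 t0 \<le> 0" using U V Q \<open>SS c t - SS c0 t0 = U + V\<close> unfolding Dl_def[symmetric] by linarith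
  then show ?thesis unfolding c_def t_def c0_def t0_def by simp
qed

lemma exp_neg_le_inv: "(c::real) \<ge> 0 \<Longrightarrow> exp (- c) \<le> 1 / (1 + c)"
proof -
  assume c: "c \<ge> 0"
  have "1 + c \<le> exp c" by (rule exp_ge_add_one_self)
  then show ?thesis using c by (simp add: exp_minus field_simps)
qed

lemma exp_neg_ge_pow:
  fixes x :: real and n :: nat
  assumes "0 \<le> x" "x \<le> 1"
  shows "exp (- (real n * x)) \<ge> (1 - x) ^ n"
proof -
  have "exp (- (real n * x)) = exp (- x) ^ n" using exp_of_nat_mult[of n "-x"] by simp
  moreover have "(1 - x) ^ n \<le> exp (- x) ^ n"
    by (rule power_mono) (use exp_ge_add_one_self[of "-x"] assms in auto)
  ultimately show ?thesis by simp
qed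

lemma ratio_mono:
  fixes x X :: real
  assumes "0 \<le> x" "x \<le> X" "X < 1"
  shows "x ^ 3 / (1 - x ^ 5) \<le> X ^ 3 / (1 - X ^ 5)"
proof -
  have X0: "X \<ge> 0" using assms by linarith
  have "x ^ 5 \<le> X ^ 5" using assms by (intro power_mono) auto
  moreover have "X ^ 5 < 1" using assms X0 by (simp add: power_less_one_iff)
  ultimately show ?thesis using assms by (intro frac_le power_mono) auto
qed

lemma RR_alt: "RR c = exp (-c) * (exp (-c) ^ 3 / (1 - exp (-c) ^ 5))"
  unfolding RR_def by (simp add: power_Suc[symmetric] mult.commute times_divide_eq_left
       del: power_Suc)

lemma RR_small:
  assumes "c > 0" "exp (-c) \<le> 1/2"
  shows "RR c \<le> 2 * exp (-c) ^ 4"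
proof -
  define x where "x = exp (-c)"
  have x0: "0 < x" "x \<le> 1/2" using assms unfolding x_def by auto
  have "x ^ 5 \<le> (1/2) ^ 5" using x0 by (intro power_mono) auto
  moreover have "(1/2::real) ^ 5 = 1/32" by (simp add: numeral_eq_Suc)
  ultimately have d: "1 - x ^ 5 \<ge> 1/2" by linarith
  have "x ^ 4 / (1 - x ^ 5) \<le> x ^ 4 / (1/2)"
    by (rule divide_left_mono[OF d]) (use x0 d in auto)
  then show ?thesis unfolding RR_def x_def[symmetric] by simp
qed

lemma crude:
  fixes c t q :: real
  assumes c: "c \<ge> 1/4" and ct: "cos t \<ge> 939/1000" and q: "0 \<le> q" "q \<le> 1/14" "q \<le> exp (- (4 * c / 3))"
  shows "exp (-c) * cos t - RR c \<ge> 10008/10000 * q"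
proof -
  define x where "x = exp (-c)"
  have x0: "x > 0" unfolding x_def by simp
  have RR: "RR c = x * (x ^ 3 / (1 - x ^ 5))" unfolding x_def by (rule RR_alt)
  have xc: "x * cos t \<ge> x * (939/1000)" using ct x0 by (simp add: mult_left_mono)
  consider "c \<le> 3/5" | "3/5 \<le> c" "c \<le> 6/5" | "6/5 \<le> c" by linarith
  then show ?thesis
  proof cases
    case 1
    have xu: "x \<le> 4/5"
    proof -
      have "1 / (1 + c) \<le> 4/5" using c c by (simp add: field_simps)
      then show ?thesis unfolding x_def using exp_neg_le_inv[of c] c by linarith
    qed
    have "x \<ge> (37/40) ^ 8"
    proof -
      have "exp (- (real 8 * (3/40))) \<ge> (1 - 3/40) ^ 8" by (rule exp_neg_ge_pow) auto
      moreover have "exp (- (real 8 * (3/40))) \<le> x" unfolding x_def using 1 by simp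
      ultimately show ?thesis by simp
    qed
    then have xl: "x \<ge> 5359/10000" by (simp add: numeral_eq_Suc) 
    have "x ^ 3 / (1 - x ^ 5) \<le> (4/5) ^ 3 / (1 - (4/5) ^ 5)" by (rule ratio_mono) (use x0 xu in auto)
    also have "\<dots> \<le> 76155/100000" by (simp add: numeral_eq_Suc)
    finally have r: "x ^ 3 / (1 - x ^ 5) \<le> 76155/100000" .
    have "x * (x ^ 3 / (1 - x ^ 5)) \<le> x * (76155/100000)" by (rule mult_left_mono[OF r]) (use x0 in simp)
    then show ?thesis unfolding RR x_def[symmetric] using xc xl q by linarith
  next
    case 2
    have xu: "x \<le> 5/8"
    proof -
      have "1 / (1 + c) \<le> 5/8" using 2 c by (simp add: field_simps)
      then show ?thesis unfolding x_def using exp_neg_le_inv[of c] c by linarith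
    qed
    have "x \<ge> (37/40) ^ 16"
    proof -
      have "exp (- (real 16 * (3/40))) \<ge> (1 - 3/40) ^ 16" by (rule exp_neg_ge_pow) auto
      moreover have "exp (- (real 16 * (3/40))) \<le> x" unfolding x_def using 2 by simp
      ultimately show ?thesis by simp
    qed
    then have xl: "x \<ge> 2872/10000" by (simp add: numeral_eq_Suc)
    have "x ^ 3 / (1 - x ^ 5) \<le> (5/8) ^ 3 / (1 - (5/8) ^ 5)" by (rule ratio_mono) (use x0 xu in auto)
    also have "\<dots> \<le> 2699/10000" by (simp add: numeral_eq_Suc)
    finally have r: "x ^ 3 / (1 - x ^ 5) \<le> 2699/10000" .
    have "x * (x ^ 3 / (1 - x ^ 5)) \<le> x * (2699/10000)" by (rule mult_left_mono[OF r]) (use x0 in simp)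
    then show ?thesis unfolding RR x_def[symmetric] using xc xl q by linarith
  next
    case 3
    have xu: "x \<le> 5/11"
    proof -
      have "1 / (1 + c) \<le> 5/11" using 3 c by (simp add: field_simps)
      then show ?thesis unfolding x_def using exp_neg_le_inv[of c] c by linarith
    qed
    have "x ^ 3 / (1 - x ^ 5) \<le> (5/11) ^ 3 / (1 - (5/11) ^ 5)" by (rule ratio_mono) (use x0 xu in auto)
    also have "\<dots> \<le> 958/10000" by (simp add: numeral_eq_Suc)
    finally have r: "x ^ 3 / (1 - x ^ 5) \<le> 958/10000" .
    have "x * (x ^ 3 / (1 - x ^ 5)) \<le> x * (958/10000)" by (rule mult_left_mono[OF r]) (use x0 in simp)
    moreover have "q \<le> x * (5/7)"
    proof -
      have "exp (- (c/3)) \<le> 1 / (1 + c/3)" by (rule exp_neg_le_inv) (use 3 in simp)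
      also have "\<dots> \<le> 5/7" using 3 by (simp add: field_simps)
      finally have e3: "exp (- (c/3)) \<le> 5/7" .
      have "exp (- (4 * c / 3)) = x * exp (- (c/3))" unfolding x_def by (simp add: exp_add[symmetric])
      also have "\<dots> \<le> x * (5/7)" by (rule mult_left_mono[OF e3]) (use x0 in simp)
      finally show ?thesis using q by linarith
    qed
    ultimately show ?thesis unfolding RR x_def[symmetric] using xc q x0 by linarith
  qed
qed

lemma exp_pow_lower:
  fixes x :: real and n :: nat
  assumes "0 \<le> x"
  shows "exp (real n * x) \<ge> (1 + x + x\<^sup>2 / 2) ^ n"
proof -
  have "exp (real n * x) = exp x ^ n" by (rule exp_of_nat_mult)
  moreover have "(1 + x + x\<^sup>2 / 2) ^ n \<le> exp x ^ n"
    by (rule power_mono[OF exp_lower_Taylor_quadratic[OF assms]]) (use assms in simp)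
  ultimately show ?thesis by simp
qed

lemma exp_279: "exp (279/100 :: real) \<ge> 14"
proof -
  have "exp (real 4 * (279/400::real)) \<ge> (1 + 279/400 + (279/400)\<^sup>2 / 2) ^ 4" by (rule exp_pow_lower) simp
  moreover have "(14::real) \<le> (1 + 279/400 + (279/400)\<^sup>2 / 2) ^ 4" by (simp add: numeral_eq_Suc power2_eq_square)
  ultimately show ?thesis by simp
qed

lemma exp_474: "exp (474/100 :: real) \<ge> 72"
proof -
  have "exp (real 8 * (474/800::real)) \<ge> (1 + 474/800 + (474/800)\<^sup>2 / 2) ^ 8" by (rule exp_pow_lower) simp
  moreover have "(72::real) \<le> (1 + 474/800 + (474/800)\<^sup>2 / 2) ^ 8" by (simp add: numeral_eq_Suc power2_eq_square)
  ultimately show ?thesis by simp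
qed

lemma exp_75: "exp (75/10 :: real) \<ge> 138"
proof -
  have "exp (real 2 * (75/20::real)) \<ge> (1 + 75/20 + (75/20)\<^sup>2 / 2) ^ 2" by (rule exp_pow_lower) simp
  moreover have "(138::real) \<le> (1 + 75/20 + (75/20)\<^sup>2 / 2) ^ 2" by (simp add: numeral_eq_Suc power2_eq_square)
  ultimately show ?thesis by simp
qed

lemma pi_bounds: "157/50 \<le> pi" "pi \<le> 3142/1000"
proof -
  have "(3141592653588 / 10^12::real) \<ge> 157/50" by simp
  then show "157/50 \<le> pi" using pi_approx(1) by linarith
  have "(31415926535899 / 10^13::real) \<le> 3142/1000" by simp
  then show "pi \<le> 3142/1000" using pi_approx(2) by linarith
qed

lemma sqrt3_bounds: "1732/1000 \<le> sqrt 3" "sqrt 3 \<le> 17321/10000"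
proof -
  show "1732/1000 \<le> sqrt 3" by (rule real_le_rsqrt) (simp add: power2_eq_square)
  show "sqrt 3 \<le> 17321/10000" by (rule real_le_lsqrt) (simp_all add: power2_eq_square)
qed

theorem mainTheorem15:
  fixes \<alpha> :: real
  assumes "\<alpha> \<ge> 1"
  shows "(\<forall>y \<ge> sqrt 3 / 2 + 1 / (4 * sqrt \<alpha>). G \<alpha> y \<le> G \<alpha> (sqrt 3 / 2 + 1 / (4 * sqrt \<alpha>)))
       \<and> G \<alpha> (sqrt 3 / 2 + 1 / (4 * sqrt \<alpha>))
           \<le> G \<alpha> (sqrt 3 / 2) - 2 * sqrt \<alpha> / 3 * exp (- 2 * pi * \<alpha> / sqrt 3)"
proof -
  define s where "s = sqrt \<alpha>"
  have s1: "s \<ge> 1" unfolding s_def using assms by simp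
  have ss: "s\<^sup>2 = \<alpha>" unfolding s_def using assms by simp
  have al0: "\<alpha> > 0" using assms by simp
  define y1 where "y1 = sqrt 3 / 2"
  define y0 where "y0 = y1 + 1 / (4 * s)"
  have pb: "157/50 \<le> pi" "pi \<le> 3142/1000" by (rule pi_bounds)+
  have r3: "1732/1000 \<le> sqrt 3" "sqrt 3 \<le> 17321/10000" by (rule sqrt3_bounds)+
  have y1b: "433/500 \<le> y1" "y1 \<le> 17321/20000" unfolding y1_def using r3 by simp_all
  have y1sq: "y1\<^sup>2 = 3/4" unfolding y1_def by (simp add: power_divide)
  have is1: "0 < 1 / (4 * s)" "1 / (4 * s) \<le> 1/4" using s1 by (simp_all add: field_simps)
  have y0b: "y1 < y0" "y0 \<le> 9/8" unfolding y0_def using is1 y1b by linarith+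
  have y0p: "y0 > 0" "y1 > 0" using y0b y1b by linarith+
  define a where "a = pi * \<alpha>"
  have api: "a \<ge> pi" unfolding a_def using assms by simp
  have a0: "a > 0" using api pi_gt_zero by linarith
  define t0 where "t0 = pi / (4 * y0\<^sup>2)"
  have y0sq: "y0\<^sup>2 \<ge> 3/4"
  proof -
    have "y1\<^sup>2 \<le> y0\<^sup>2" using y0b y0p by (intro power_mono) auto
    then show ?thesis using y1sq by simp
  qed
  have t0b: "0 \<le> t0" "t0 \<le> pi / 3"
  proof -
    show "0 \<le> t0" unfolding t0_def by simp
    have "4 * y0\<^sup>2 \<ge> 3" using y0sq by simp
    then show "t0 \<le> pi / 3" unfolding t0_def by (intro divide_left_mono) auto
  qed
  have cos0: "cos t0 \<ge> 1/2"
  proof -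
    have "cos (pi / 3) \<le> cos t0" using cos_mono_le_eq[of "pi/3" t0] t0b by simp
    then show ?thesis by (simp add: cos_60)
  qed
  define c0 where "c0 = a / y0"
  define q0 where "q0 = exp (- c0)"
  have c0b: "c0 \<ge> 279/100"
  proof -
    have "pi / (9/8) \<le> a / y0" by (rule frac_le) (use api a0 y0b y0p pi_gt_zero in linarith)+
    then show ?thesis unfolding c0_def using pb by simp
  qed
  have q0p: "q0 > 0" unfolding q0_def by simp
  have q0b: "q0 \<le> 1/14"
  proof -
    have "exp (279/100) \<le> exp c0" using c0b by simp
    then have "exp c0 \<ge> 14" using exp_279 by linarith
    then show ?thesis unfolding q0_def by (simp add: exp_minus field_simps)
  qed
  have c0p: "c0 > 0" using c0b by simp
  have RR0: "RR c0 \<le> q0 / 1372"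
  proof -
    have "RR c0 \<le> 2 * q0 ^ 4" unfolding q0_def by (rule RR_small[OF c0p]) (use q0b in \<open>simp add: q0_def\<close>)
    moreover have "q0 ^ 3 \<le> (1/14) ^ 3" using q0b q0p by (intro power_mono) auto
    then have "q0 * q0 ^ 3 \<le> q0 * (1/14) ^ 3" using q0p by (intro mult_left_mono) auto
    then have "q0 ^ 4 \<le> q0 / 2744" by (simp add: power_Suc[symmetric] del: power_Suc) (simp add: numeral_eq_Suc)
    ultimately show ?thesis by simp
  qed
  have G0: "G \<alpha> y0 = 1 + 2 * SS c0 t0"
    unfolding c0_def t0_def a_def using G_SS[OF al0 y0p(1)] by simp
  have G0lb: "G \<alpha> y0 \<ge> 1 - 2 * (10008/10000) * q0"
  proof -
    have "SS c0 t0 \<ge> - q0 * cos t0 - RR c0" unfolding q0_def by (rule SS_bounds(2)[OF c0p])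
    moreover have "q0 * cos t0 \<le> q0" using q0p by (simp add: mult_left_le)
    ultimately show ?thesis unfolding G0 using RR0 q0p by linarith
  qed
  have part1: "G \<alpha> y \<le> G \<alpha> y0" if yy: "y \<ge> y0" for y
  proof -
    have yp: "y > 0" using yy y0p by linarith
    define c where "c = a / y"
    define t where "t = pi / (4 * y\<^sup>2)"
    have Gy: "G \<alpha> y = 1 + 2 * SS c t" unfolding c_def t_def a_def using G_SS[OF al0 yp] by simp
    have cp: "c > 0" unfolding c_def using a0 yp by simp
    consider "y \<le> 3/2" | "3/2 \<le> y" "c \<le> 1/4" | "3/2 \<le> y" "1/4 \<le> c" by linarith
    then show ?thesis
    proof cases
      case 1
      have ex: "exp (a * (8/3 - 1 / y0)) \<ge> 72"
      proof -
        have "1 / y0 \<le> 1 / (433/500)" using y0b y1b by (intro divide_left_mono) auto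
        then have "8/3 - 1 / y0 \<ge> 1964/1299" by simp
        then have "a * (8/3 - 1 / y0) \<ge> pi * (1964/1299)" using api a0 by (intro mult_mono) auto
        moreover have "pi * (1964/1299) \<ge> 474/100" using pb by simp
        ultimately have "exp (474/100) \<le> exp (a * (8/3 - 1 / y0))" by simp
        then show ?thesis using exp_474 by linarith
      qed
      have "SS (a / y) (pi / (4 * y\<^sup>2)) \<le> SS (a / y0) (pi / (4 * y0\<^sup>2))"
        by (rule region1[OF api _ y0b(2) yy 1 _ ex]) (use y1b y0b cos0 in \<open>simp_all add: t0_def\<close>)
      then show ?thesis unfolding Gy G0 c_def t_def c0_def t0_def by simp
    next
      case 2
      have tb: "\<bar>t\<bar> \<le> c\<^sup>2 / 12"
      proof -
        have "pi * 3 \<le> pi * pi" using pb by (intro mult_left_mono) auto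
        also have "pi * pi \<le> a * a" using api a0 by (intro mult_mono) auto
        finally have "pi * 3 / (12 * y\<^sup>2) \<le> a * a / (12 * y\<^sup>2)" using yp by (intro divide_right_mono) auto
        then show ?thesis unfolding t_def c_def by (simp add: power2_eq_square field_simps)
      qed
      have "1 + 2 * SS c t \<le> 17/20" by (rule small_c_bound[OF cp 2(2) tb])
      then show ?thesis unfolding Gy using G0lb q0b by linarith
    next
      case 3
      have ct: "cos t \<ge> 939/1000"
      proof -
        have "y\<^sup>2 \<ge> (3/2)\<^sup>2" using 3 by (intro power_mono) auto
        then have "4 * y\<^sup>2 \<ge> 9" by (simp add: power2_eq_square)
        then have tt: "t \<le> pi / 9" unfolding t_def by (intro divide_left_mono) auto
        have t00: "t \<ge> 0" unfolding t_def by simp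
        have "t\<^sup>2 \<le> (3142/9000)\<^sup>2" using tt t00 pb by (intro power_mono) auto
        then have "t\<^sup>2 / 2 \<le> 61/1000" by (simp add: power2_eq_square)
        then show ?thesis using one_minus_cos_le[of t] by linarith
      qed
      have qe: "q0 \<le> exp (- (4 * c / 3))"
      proof -
        have "4 * y0 \<le> 3 * y" using 3 y0b by linarith
        then have "4 * c / 3 \<le> c0" unfolding c_def c0_def using a0 yp y0p by (simp add: field_simps mult_left_mono)
        then show ?thesis unfolding q0_def by simp
      qed
      have cr: "exp (-c) * cos t - RR c \<ge> 10008/10000 * q0"
        by (rule crude[OF 3(2) ct _ q0b qe]) (use q0p in simp)
      have "SS c t \<le> - exp (-c) * cos t + RR c" by (rule SS_bounds(1)[OF cp])
      then show ?thesis unfolding Gy using G0lb cr by linarith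
    qed
  qed
  define c1 where "c1 = a / y1"
  define q1 where "q1 = exp (- c1)"
  have c1p: "c1 > 0" unfolding c1_def using a0 y0p by simp
  have q1p: "q1 > 0" unfolding q1_def by simp
  have c10: "c1 \<ge> c0" unfolding c1_def c0_def using a0 y0p y0b by (intro divide_left_mono) auto
  have q1q0: "q1 \<le> q0" unfolding q1_def q0_def using c10 by simp
  have q1e: "q1 = exp (- 2 * pi * \<alpha> / sqrt 3)"
    unfolding q1_def c1_def a_def y1_def by (simp add: field_simps)
  have G1: "G \<alpha> y1 = 1 + 2 * SS c1 (pi / 3)"
  proof -
    have "4 * y1\<^sup>2 = 3" using y1sq by simp
    then have e13: "pi / (4 * y1\<^sup>2) = pi / 3" by simp
    show ?thesis unfolding c1_def a_def G_SS[OF al0 y0p(2)] e13 ..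
  qed
  have RR1: "RR c1 \<le> q1 / 1372"
  proof -
    have q1b: "q1 \<le> 1/14" using q1q0 q0b by simp
    have "RR c1 \<le> 2 * q1 ^ 4" unfolding q1_def by (rule RR_small[OF c1p]) (use q1b in \<open>simp add: q1_def\<close>)
    moreover have "q1 ^ 3 \<le> (1/14) ^ 3" using q1b q1p by (intro power_mono) auto
    then have "q1 * q1 ^ 3 \<le> q1 * (1/14) ^ 3" using q1p by (intro mult_left_mono) auto
    then have "q1 ^ 4 \<le> q1 / 2744" by (simp add: power_Suc[symmetric] del: power_Suc) (simp add: numeral_eq_Suc)
    ultimately show ?thesis by simp
  qed
  have RR0': "RR c0 \<le> 2 * q1 / 138"
  proof -
    have "RR c0 \<le> 2 * q0 ^ 4" unfolding q0_def by (rule RR_small[OF c0p]) (use q0b in \<open>simp add: q0_def\<close>)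
    moreover have "q0 ^ 4 \<le> q1 / 138"
    proof -
      have "4 / y0 \<ge> 4 / (9/8)" using y0b y0p by (intro divide_left_mono) auto
      moreover have "1 / y1 \<le> 1 / (433/500)" using y1b by (intro divide_left_mono) auto
      ultimately have "4 / y0 - 1 / y1 \<ge> 2400/1000" by simp
      then have "a * (4 / y0 - 1 / y1) \<ge> pi * (2400/1000)" using api a0 by (intro mult_mono) auto
      then have "4 * c0 - c1 \<ge> 75/10" unfolding c0_def c1_def using pb by (simp add: field_simps)
      then have "exp (75/10) \<le> exp (4 * c0 - c1)" by simp
      then have e: "exp (4 * c0 - c1) \<ge> 138" using exp_75 by linarith
      have "q0 ^ 4 * exp (4 * c0 - c1) = q1"
        unfolding q0_def q1_def by (simp add: exp_of_nat_mult[symmetric] exp_add[symmetric] algebra_simps)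
      moreover have "q0 ^ 4 * 138 \<le> q0 ^ 4 * exp (4 * c0 - c1)" by (rule mult_left_mono[OF e]) (use q0p in simp)
      ultimately show ?thesis by simp
    qed
    ultimately show ?thesis by simp
  qed
  have q0q1: "q0 \<ge> q1 * (1 + 4/5 * s)"
  proof -
    have d: "y0 - y1 = 1 / (4 * s)" unfolding y0_def by simp
    have "c1 - c0 = a * (y0 - y1) / (y0 * y1)" unfolding c1_def c0_def using y0p by (simp add: field_simps)
    also have "\<dots> = pi * s / (4 * y0 * y1)"
      unfolding d a_def ss[symmetric] using y0p s1 by (simp add: field_simps power2_eq_square)
    finally have "c1 - c0 = pi * s / (4 * y0 * y1)" .
    moreover have "pi * s / (4 * y0 * y1) \<ge> 4/5 * s"
    proof -
      have "y0 * y1 \<le> 9/8 * (17321/20000)" using y0b y1b y0p by (intro mult_mono) auto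
      then have "4 * y0 * y1 \<le> 39/10" by simp
      then have "pi * s / (39/10) \<le> pi * s / (4 * y0 * y1)" using s1 y0p pi_gt_zero by (intro divide_left_mono) auto
      moreover have "4/5 * s \<le> pi * s / (39/10)" using pb s1 by (simp add: field_simps mult_right_mono)
      ultimately show ?thesis by linarith
    qed
    ultimately have "c1 - c0 \<ge> 4/5 * s" by simp
    then have "exp (c1 - c0) \<ge> 1 + 4/5 * s" using exp_ge_add_one_self[of "c1 - c0"] by linarith
    moreover have "q0 = q1 * exp (c1 - c0)" unfolding q0_def q1_def by (simp add: exp_add[symmetric])
    ultimately show ?thesis using q1p by (simp add: mult_left_mono)
  qed
  have G0ub: "G \<alpha> y0 \<le> 1 - q0 + 2 * RR c0"
  proof -
    have "SS c0 t0 \<le> - q0 * cos t0 + RR c0" unfolding q0_def by (rule SS_bounds(1)[OF c0p])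
    moreover have "q0 * (1/2) \<le> q0 * cos t0" by (rule mult_left_mono[OF cos0]) (use q0p in simp)
    ultimately show ?thesis unfolding G0 by linarith
  qed
  have G1lb: "G \<alpha> y1 \<ge> 1 - q1 - 2 * RR c1"
  proof -
    have "SS c1 (pi/3) \<ge> - q1 * cos (pi/3) - RR c1" unfolding q1_def by (rule SS_bounds(2)[OF c1p])
    then show ?thesis unfolding G1 by (simp add: cos_60)
  qed
  have part2: "G \<alpha> y0 \<le> G \<alpha> y1 - 2 * s / 3 * q1"
  proof -
    have sq1: "s * q1 \<ge> q1" using s1 q1p by (simp add: mult_right_mono)
    have "q1 * (1 + 4/5 * s) = q1 + 4/5 * (s * q1)" by (simp add: algebra_simps)
    moreover have "2 * s / 3 * q1 = 2/3 * (s * q1)" by simp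
    ultimately show ?thesis using G0ub G1lb q0q1 RR1 RR0' sq1 q1p by linarith
  qed
  show ?thesis
    using part1 part2 unfolding y0_def y1_def s_def q1e by auto
qed

end
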